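(* Let $n \ge 1$, let $\beta_w, \beta_n \in (0,1)$ with $\beta_n < \beta_w$, and let $w_1, \dots, w_n \in \mathbb{R}_{\ge 0}$ with $W := \sum_{i=1}^n w_i \neq 0$. Then there exist integers $t_1, \dots, t_n \in \mathbb{Z}_{\ge 0}$, with $T := \sum_{i=1}^n t_i$, such that for every $S \subseteq [n]$ with $w(S) > \beta_w W$ we have $t(S) > \beta_n T$, and $$T \le \left\lceil \frac{\beta_w(1-\beta_w)}{\beta_w - \beta_n}\, n \right\rceil.$$
   Context: $[n] := \{1,\dots,n\}$. For $S \subseteq [n]$, $w(S) := \sum_{i\in S} w_i$ and $t(S) := \sum_{i \in S} t_i$. (This is the upper bound for the Weight Qualification problem, which asks to minimize $T$ subject to the displayed constraint.) *)

theory Defs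
  imports Complex_Main
begin

end

theory Submission
  imports Defs
begin

lemma construct:
  fixes w :: "nat \<Rightarrow> real" and n :: nat and b :: real
  assumes nn: "\<forall>i\<in>{1..n}. w i \<ge> 0" and ex: "\<exists>i\<in>{1..n}. w i > 0"
    and b0: "0 \<le> b" and b1: "b \<le> 1"
  shows "\<exists>\<alpha> (t :: nat \<Rightarrow> int). \<alpha> \<ge> 0 \<and>
     (\<forall>i\<in>{1..n}. \<alpha> * w i - b \<le> of_int (t i) \<and> of_int (t i) \<le> \<alpha> * w i + 1 - b) \<and>
     (\<Sum>i\<in>{1..n}. t i) = int N"
proof (induction N)
  case 0
  show ?case
    by (rule exI[of _ 0], rule exI[of _ "\<lambda>_. 0"]) (use b0 b1 in auto)
next
  case (Suc N)
  then obtain \<alpha> and t :: "nat \<Rightarrow> int" where a0: "\<alpha> \<ge> 0"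
    and bd: "\<forall>i\<in>{1..n}. \<alpha> * w i - b \<le> of_int (t i) \<and> of_int (t i) \<le> \<alpha> * w i + 1 - b"
    and sm: "(\<Sum>i\<in>{1..n}. t i) = int N" by blast
  define P where "P = {i\<in>{1..n}. w i > 0}"
  have Pf: "finite P" and Pne: "P \<noteq> {}" using ex by (auto simp: P_def)
  define f where "f = (\<lambda>i. (of_int (t i) + b) / w i)"
  define \<alpha>' where "\<alpha>' = Min (f ` P)"
  have "\<alpha>' \<in> f ` P" unfolding \<alpha>'_def using Pf Pne by (intro Min_in) auto
  then obtain j where jP: "j \<in> P" and aj: "\<alpha>' = f j" by blast
  have le: "\<alpha>' \<le> f i" if "i \<in> P" for i
    unfolding \<alpha>'_def using Pf that by auto
  have wj: "w j > 0" and j1: "j \<in> {1..n}" using jP by (auto simp: P_def)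
  have ajw: "\<alpha>' * w j = of_int (t j) + b" using aj wj by (simp add: f_def)
  have "\<alpha> * w j - b \<le> of_int (t j)" using bd j1 by blast
  hence "\<alpha> * w j \<le> of_int (t j) + b" by linarith
  hence aa: "\<alpha> \<le> \<alpha>'" using ajw wj
    by (metis mult_le_cancel_right_pos)
  define t' where "t' = (\<lambda>i. t i + (if i = j then 1 else 0))"
  have "(\<Sum>i\<in>{1..n}. t' i) = (\<Sum>i\<in>{1..n}. t i) + (\<Sum>i\<in>{1..n}. (if i = j then 1 else 0))"
    unfolding t'_def by (rule sum.distrib)
  also have "\<dots> = int N + 1" using sm j1 by simp
  finally have sm': "(\<Sum>i\<in>{1..n}. t' i) = int (Suc N)" by simp
  have bd': "\<alpha>' * w i - b \<le> of_int (t' i) \<and> of_int (t' i) \<le> \<alpha>' * w i + 1 - b"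
    if i1: "i \<in> {1..n}" for i
  proof (cases "i = j")
    case True
    then show ?thesis using ajw b0 b1 by (simp add: t'_def)
  next
    case False
    have bi: "\<alpha> * w i - b \<le> of_int (t i)" "of_int (t i) \<le> \<alpha> * w i + 1 - b" using bd i1 by auto
    have wi: "w i \<ge> 0" using nn i1 by auto
    have up: "\<alpha> * w i \<le> \<alpha>' * w i" using aa wi by (simp add: mult_right_mono)
    show ?thesis
    proof (cases "w i = 0")
      case True
      then show ?thesis using bi False by (simp add: t'_def)
    next
      case False2: False
      hence "i \<in> P" using wi i1 by (auto simp: P_def)
      hence "\<alpha>' \<le> (of_int (t i) + b) / w i" using le f_def by auto
      hence "\<alpha>' * w i \<le> of_int (t i) + b" using False2 wi by (simp add: pos_le_divide_eq)
      then show ?thesis using bi up False by (simp add: t'_def)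
    qed
  qed
  have "\<alpha>' \<ge> 0" using aa a0 by linarith
  then show ?case using bd' sm' by blast
qed

theorem corollary1:
  fixes n :: nat and \<beta>w \<beta>n :: real and w :: "nat \<Rightarrow> real"
  assumes "n \<ge> 1"
    and "0 < \<beta>w" "\<beta>w < 1" "0 < \<beta>n" "\<beta>n < 1" "\<beta>n < \<beta>w"
    and "\<forall>i\<in>{1..n}. w i \<ge> 0"
    and "(\<Sum>i\<in>{1..n}. w i) \<noteq> 0"
  shows "\<exists>t :: nat \<Rightarrow> int.
           (\<forall>i\<in>{1..n}. t i \<ge> 0) \<and>
           (\<forall>S \<subseteq> {1..n}. (\<Sum>i\<in>S. w i) > \<beta>w * (\<Sum>i\<in>{1..n}. w i)
               \<longrightarrow> real_of_int (\<Sum>i\<in>S. t i) > \<beta>n * real_of_int (\<Sum>i\<in>{1..n}. t i)) \<and>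
           (\<Sum>i\<in>{1..n}. t i) \<le> \<lceil>\<beta>w * (1 - \<beta>w) / (\<beta>w - \<beta>n) * real n\<rceil>"
proof -
  note nn = assms(7)
  define W where "W = (\<Sum>i\<in>{1..n}. w i)"
  have W0: "W \<ge> 0" unfolding W_def using nn by (intro sum_nonneg) auto
  hence Wp: "W > 0" using assms(8) W_def by auto
  have ex: "\<exists>i\<in>{1..n}. w i > 0"
  proof (rule ccontr)
    assume "\<not> ?thesis"
    hence "\<forall>i\<in>{1..n}. w i = 0" using nn by force
    hence "W = 0" unfolding W_def by simp
    thus False using Wp by simp
  qed
  define c where "c = \<beta>w * (1 - \<beta>w) / (\<beta>w - \<beta>n)"
  define N where "N = \<lceil>c * real n\<rceil>"
  have cpos: "c > 0" unfolding c_def using assms by simp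
  have "c * real n > 0" using cpos assms(1) by simp
  hence Npos: "N > 0" unfolding N_def by simp
  have Nge: "real_of_int N \<ge> c * real n" unfolding N_def by simp
  obtain \<alpha> and t :: "nat \<Rightarrow> int" where a0: "\<alpha> \<ge> 0"
    and bd: "\<forall>i\<in>{1..n}. \<alpha> * w i - \<beta>w \<le> of_int (t i) \<and> of_int (t i) \<le> \<alpha> * w i + 1 - \<beta>w"
    and sm: "(\<Sum>i\<in>{1..n}. t i) = int (nat N)"
    using construct[OF nn ex, of \<beta>w "nat N"] assms by auto
  have smN: "(\<Sum>i\<in>{1..n}. t i) = N" using sm Npos by simp
  have tnn: "\<forall>i\<in>{1..n}. t i \<ge> 0"
  proof
    fix i assume "i \<in> {1..n}"
    hence "\<alpha> * w i - \<beta>w \<le> of_int (t i)" "w i \<ge> 0" using bd nn by auto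
    moreover have "\<alpha> * w i \<ge> 0" using a0 \<open>w i \<ge> 0\<close> by simp
    ultimately have "of_int (t i) > (-1::real)" using assms(3) by linarith
    thus "t i \<ge> 0" by simp
  qed
  have key1: "(\<beta>w - \<beta>n) * real_of_int N \<ge> \<beta>w * (1 - \<beta>w) * real n"
  proof -
    have "(\<beta>w - \<beta>n) * real_of_int N \<ge> (\<beta>w - \<beta>n) * (c * real n)"
      using Nge assms by (simp add: mult_left_mono)
    also have "(\<beta>w - \<beta>n) * (c * real n) = \<beta>w * (1 - \<beta>w) * real n"
      unfolding c_def using assms by (simp add: field_simps)
    finally show ?thesis by simp
  qed
  have key2: "real_of_int N > (1 - \<beta>w) * real n"
  proof -
    have "\<beta>w * (1 - \<beta>w) * real n > (\<beta>w - \<beta>n) * ((1 - \<beta>w) * real n)"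
      using assms by (simp add: mult_strict_right_mono)
    hence "(\<beta>w - \<beta>n) * real_of_int N > (\<beta>w - \<beta>n) * ((1 - \<beta>w) * real n)" using key1 by linarith
    thus ?thesis using assms by (simp add: mult_less_cancel_left_pos)
  qed
  define h where "h = (\<lambda>i. real_of_int (t i) - \<alpha> * w i)"
  have main: "real_of_int (\<Sum>i\<in>S. t i) > \<beta>n * real_of_int (\<Sum>i\<in>{1..n}. t i)"
    if Ss: "S \<subseteq> {1..n}" and wS: "(\<Sum>i\<in>S. w i) > \<beta>w * (\<Sum>i\<in>{1..n}. w i)" for S
  proof -
    define A where "A = {1..n} - S"
    have fS: "finite S" using Ss finite_subset by blast
    have fA: "finite A" unfolding A_def by simp
    have dj: "S \<inter> A = {}" and un: "S \<union> A = {1..n}" using Ss unfolding A_def by auto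
    have splitf: "(\<Sum>i\<in>{1..n}. g i) = (\<Sum>i\<in>S. g i) + (\<Sum>i\<in>A. g i)" for g :: "nat \<Rightarrow> real"
      using sum.union_disjoint[OF fS fA dj, of g] un by simp
    have splitt: "(\<Sum>i\<in>{1..n}. t i) = (\<Sum>i\<in>S. t i) + (\<Sum>i\<in>A. t i)"
      using sum.union_disjoint[OF fS fA dj, of t] un by simp
    define a where "a = (\<Sum>i\<in>A. w i)"
    define HS where "HS = (\<Sum>i\<in>S. h i)"
    define HA where "HA = (\<Sum>i\<in>A. h i)"
    define tA where "tA = real_of_int (\<Sum>i\<in>A. t i)"
    define kS where "kS = real (card S)"
    define kA where "kA = real (card A)"
    have Wsplit: "W = (\<Sum>i\<in>S. w i) + a" unfolding W_def a_def by (rule splitf)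
    have a0': "a \<ge> 0" unfolding a_def using nn A_def by (auto intro: sum_nonneg)
    have wS0: "(\<Sum>i\<in>S. w i) \<ge> 0" using nn Ss by (auto intro: sum_nonneg)
    have aW: "a < (1 - \<beta>w) * W" using wS Wsplit W_def by (simp add: algebra_simps)
    have Wa: "W - a \<ge> 0" using Wsplit wS0 by simp
    have tA_eq: "tA = \<alpha> * a + HA"
      unfolding tA_def HA_def a_def h_def by (simp add: sum_subtractf sum_distrib_left)
    have N_eq: "real_of_int N = \<alpha> * W + HS + HA"
    proof -
      have "real_of_int N = (\<Sum>i\<in>{1..n}. real_of_int (t i))" using smN by (metis of_int_sum)
      also have "\<dots> = (\<Sum>i\<in>{1..n}. \<alpha> * w i + h i)" unfolding h_def by simp
      also have "\<dots> = \<alpha> * W + (\<Sum>i\<in>{1..n}. h i)"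
        unfolding W_def by (simp add: sum.distrib sum_distrib_left)
      also have "(\<Sum>i\<in>{1..n}. h i) = HS + HA" unfolding HS_def HA_def by (rule splitf)
      finally show ?thesis by simp
    qed
    have HSb: "HS \<ge> - \<beta>w * kS"
    proof -
      have "(\<Sum>i\<in>S. h i) \<ge> (\<Sum>i\<in>S. - \<beta>w)"
      proof (rule sum_mono)
        fix i assume "i \<in> S"
        hence "\<alpha> * w i - \<beta>w \<le> of_int (t i)" using bd Ss by blast
        thus "- \<beta>w \<le> h i" unfolding h_def by linarith
      qed
      thus ?thesis unfolding HS_def kS_def by (simp add: mult.commute)
    qed
    have HAb: "HA \<le> (1 - \<beta>w) * kA"
    proof -
      have "(\<Sum>i\<in>A. h i) \<le> (\<Sum>i\<in>A. 1 - \<beta>w)"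
      proof (rule sum_mono)
        fix i assume "i \<in> A"
        hence "of_int (t i) \<le> \<alpha> * w i + 1 - \<beta>w" using bd A_def by blast
        thus "h i \<le> 1 - \<beta>w" unfolding h_def by linarith
      qed
      thus ?thesis unfolding HA_def kA_def by (simp add: mult.commute)
    qed
    have kk: "kS + kA = real n"
    proof -
      have "card S + card A = card {1..n}" using card_Un_disjoint[OF fS fA dj] un by simp
      thus ?thesis unfolding kS_def kA_def by (metis card_atLeastAtMost diff_Suc_1 of_nat_add)
    qed
    have kS0: "kS \<ge> 0" unfolding kS_def by simp
    have e1: "W * tA = real_of_int N * a - a * HS + (W - a) * HA"
      using tA_eq N_eq by (simp add: algebra_simps)
    have e2: "- a * HS \<le> a * (\<beta>w * kS)"
      using mult_left_mono[OF HSb a0'] by simp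
    have e3: "(W - a) * HA \<le> (W - a) * ((1 - \<beta>w) * kA)"
      using mult_left_mono[OF HAb Wa] by simp
    have e4: "a * (\<beta>w * kS) + (W - a) * ((1 - \<beta>w) * kA) \<le> (W - a) * (1 - \<beta>w) * real n"
    proof -
      have "a * (\<beta>w * kS) + (W - a) * ((1 - \<beta>w) * kA) =
            (W - a) * (1 - \<beta>w) * real n + kS * (a - (1 - \<beta>w) * W)"
        using kk by (simp add: algebra_simps kk[symmetric])
      moreover have "kS * (a - (1 - \<beta>w) * W) \<le> 0"
        using kS0 aW by (simp add: mult_nonneg_nonpos)
      ultimately show ?thesis by linarith
    qed
    define e where "e = (1 - \<beta>w) * W - a"
    have ep: "e > 0" using aW e_def by simp
    have D: "(1 - \<beta>n) * real_of_int N * W - (real_of_int N * a + (W - a) * (1 - \<beta>w) * real n)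
           = W * ((\<beta>w - \<beta>n) * real_of_int N - \<beta>w * (1 - \<beta>w) * real n)
             + e * (real_of_int N - (1 - \<beta>w) * real n)"
      unfolding e_def by (simp add: algebra_simps)
    have D1: "W * ((\<beta>w - \<beta>n) * real_of_int N - \<beta>w * (1 - \<beta>w) * real n) \<ge> 0"
      using Wp key1 by simp
    have D2: "e * (real_of_int N - (1 - \<beta>w) * real n) > 0"
      using ep key2 by simp
    have "W * tA < W * ((1 - \<beta>n) * real_of_int N)"
      using e1 e2 e3 e4 D D1 D2 by (simp add: algebra_simps)
    hence tAl: "tA < (1 - \<beta>n) * real_of_int N" using Wp by (simp add: mult_less_cancel_left_pos)
    have "real_of_int (\<Sum>i\<in>S. t i) = real_of_int N - tA"
    proof -
      have "(\<Sum>i\<in>S. t i) = N - (\<Sum>i\<in>A. t i)" using splitt smN by linarith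
      hence "real_of_int (\<Sum>i\<in>S. t i) = real_of_int (N - (\<Sum>i\<in>A. t i))" by (rule arg_cong)
      thus ?thesis unfolding tA_def by (simp only: of_int_diff)
    qed
    thus ?thesis using tAl smN by (simp add: algebra_simps)
  qed
  have bnd: "(\<Sum>i\<in>{1..n}. t i) \<le> \<lceil>\<beta>w * (1 - \<beta>w) / (\<beta>w - \<beta>n) * real n\<rceil>"
    using smN unfolding N_def c_def by simp
  show ?thesis
    apply (rule exI[of _ t])
    using tnn main bnd unfolding W_def by blast
qed

end
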